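(* Let $n\ge 1$, $K\ge 1$ be integers and $p_n\in[0,1]$. Let $(\mathcal{G}(n),\mathcal{A}(n))$ be the output of the Threshold exploration algorithm and let $(G(n,p_n),\mathcal{I}(n))$ be the graph and final active set of the Threshold model (both described in the context). Then the joint distribution of $(\mathcal{G}(n),\mathcal{A}(n))$ is identical to the joint distribution of $(G(n,p_n),\mathcal{I}(n))$.
   Context: $G(n,p_n)$ is the Erdős–Rényi random graph on vertex set $[n]=\{1,\dots,n\}$, each of the pairs $\{u,v\}$, $u\ne v$, being an edge independently with probability $p_n$. For a graph $G$ and vertex set $U$, $G_U$ is the induced subgraph and $d_{\max}$ the maximum degree. Threshold model: given a realization of $G(n,p_n)$, set $\mathcal{I}(0)=\varnothing$. At each step $t+1$ ($0\le t\le n-1$), a vertex $v$ is chosen uniformly at random among vertices not selected before (independently of the graph); if $d_{\max}(G_{\mathcal{I}(t)\cup\{v\}})<K$ set $\mathcal{I}(t+1)=\mathcal{I}(t)\cup\{v\}$, otherwise $\mathcal{I}(t+1)=\mathcal{I}(t)$. $\mathcal{I}(n)$ is the final (maximal greedy $K$-independent) set. Threshold exploration algorithm: maintain sets $\mathcal{A}_0(t),\dots,\mathcal{A}_{K-1}(t)$ (active vertices with exactly $k$ active neighbours), $\mathcal{B}(t)$ (frozen vertices) and $\mathcal{U}(t)$ (unexplored vertices), initially $\mathcal{A}_k(0)=\mathcal{B}(0)=\varnothing$, $\mathcal{U}(0)=[n]$; let $\mathcal{A}(t)=\bigcup_k\mathcal{A}_k(t)$. At step $t+1$, select $v\in\mathcal{U}(t)$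 uniformly at random, remove it from $\mathcal{U}$, and for each $u\in\mathcal{A}(t)\cup\mathcal{B}(t)$ independently add the edge $\{v,u\}$ with probability $p_n$. Let $v_1,\dots,v_r$ ($r\ge0$) be the vertices of $\mathcal{A}(t)$ joined to $v$, with $v_i\in\mathcal{A}_{k_i}(t)$. If $r<K$ and no $v_i$ lies in $\mathcal{A}_{K-1}(t)$, then $v$ is put into $\mathcal{A}_r$ and each $v_i$ is moved from $\mathcal{A}_{k_i}$ to $\mathcal{A}_{k_i+1}$; otherwise $v$ is put into $\mathcal{B}$ and the sets $\mathcal{A}_k$ are unchanged. After $n$ steps the algorithm outputs $\mathcal{A}(n)$ and the graph $\mathcal{G}(n)$ on $[n]$ formed by all edges added. *)

theory Defs
  imports "HOL-Probability.Probability"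
begin

text \<open>Graphs on vertex set [n] = {1..n} are represented by their edge sets;
an edge {u,v} (u \<noteq> v) is the two-element set {u,v}.\<close>

definition vertex_pairs :: "nat \<Rightarrow> nat set set" where
  "vertex_pairs n = {e. \<exists>u v. u \<in> {1..n} \<and> v \<in> {1..n} \<and> u \<noteq> v \<and> e = {u, v}}"

definition erdos_renyi :: "nat \<Rightarrow> real \<Rightarrow> nat set set pmf" where
  "erdos_renyi n p =
     map_pmf (\<lambda>f. {e \<in> vertex_pairs n. f e})
             (Pi_pmf (vertex_pairs n) False (\<lambda>_. bernoulli_pmf p))"

definition deg_in :: "nat set set \<Rightarrow> nat set \<Rightarrow> nat \<Rightarrow> nat" where
  "deg_in E U u = card {w \<in> U. {u, w} \<in> E}"

definition dmax_induced :: "nat set set \<Rightarrow> nat set \<Rightarrow> nat" where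
  "dmax_induced E U = (if U = {} then 0 else Max (deg_in E U ` U))"

fun iter_pmf :: "nat \<Rightarrow> ('s \<Rightarrow> 's pmf) \<Rightarrow> 's \<Rightarrow> 's pmf" where
  "iter_pmf 0 f s = return_pmf s"
| "iter_pmf (Suc t) f s = bind_pmf (f s) (iter_pmf t f)"

text \<open>Threshold model. State: (I(t), set of vertices selected so far).\<close>
definition threshold_step ::
  "nat \<Rightarrow> nat \<Rightarrow> nat set set \<Rightarrow> nat set \<times> nat set \<Rightarrow> (nat set \<times> nat set) pmf" where
  "threshold_step n K E st =
     (case st of (I, S) \<Rightarrow>
        map_pmf (\<lambda>v. (if dmax_induced E (I \<union> {v}) < K then I \<union> {v} else I, S \<union> {v}))
                (pmf_of_set ({1..n} - S)))"

definition threshold_model :: "nat \<Rightarrow> nat \<Rightarrow> nat set set \<Rightarrow> nat set pmf" where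
  "threshold_model n K E = map_pmf fst (iter_pmf n (threshold_step n K E) ({}, {}))"

text \<open>Threshold exploration algorithm.  Actk k = A_k(t), Bset = B(t), Uset = U(t),
  Edges = edges added so far.\<close>
record expl_state =
  Actk :: "nat \<Rightarrow> nat set"
  Bset :: "nat set"
  Uset :: "nat set"
  Edges :: "nat set set"

definition active_set :: "nat \<Rightarrow> expl_state \<Rightarrow> nat set" where
  "active_set K s = (\<Union>k<K. Actk s k)"

definition expl_update :: "nat \<Rightarrow> expl_state \<Rightarrow> nat \<Rightarrow> (nat \<Rightarrow> bool) \<Rightarrow> expl_state" where
  "expl_update K s v f =
     (let R = {u \<in> active_set K s. f u};
          r = card R;
          newE = Edges s \<union> {{v, u} | u. u \<in> active_set K s \<union> Bset s \<and> f u};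
          U' = Uset s - {v}
      in if r < K \<and> (\<forall>u\<in>R. u \<notin> Actk s (K - 1)) then
           \<lparr> Actk = (\<lambda>k. {u. (u \<in> Actk s k \<and> u \<notin> R)
                             \<or> (0 < k \<and> u \<in> R \<and> u \<in> Actk s (k - 1))
                             \<or> (u = v \<and> k = r)}),
             Bset = Bset s, Uset = U', Edges = newE \<rparr>
         else
           \<lparr> Actk = Actk s, Bset = Bset s \<union> {v}, Uset = U', Edges = newE \<rparr>)"

definition expl_step :: "nat \<Rightarrow> real \<Rightarrow> expl_state \<Rightarrow> expl_state pmf" where
  "expl_step K p s =
     do { v \<leftarrow> pmf_of_set (Uset s);
          f \<leftarrow> Pi_pmf (active_set K s \<union> Bset s) False (\<lambda>_. bernoulli_pmf p);
          return_pmf (expl_update K s v f) }"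

definition expl_init :: "nat \<Rightarrow> expl_state" where
  "expl_init n = \<lparr> Actk = (\<lambda>_. {}), Bset = {}, Uset = {1..n}, Edges = {} \<rparr>"

definition threshold_exploration :: "nat \<Rightarrow> nat \<Rightarrow> real \<Rightarrow> (nat set set \<times> nat set) pmf" where
  "threshold_exploration n K p =
     map_pmf (\<lambda>s. (Edges s, active_set K s)) (iter_pmf n (expl_step K p) (expl_init n))"

definition threshold_model_joint :: "nat \<Rightarrow> nat \<Rightarrow> real \<Rightarrow> (nat set set \<times> nat set) pmf" where
  "threshold_model_joint n K p =
     do { E \<leftarrow> erdos_renyi n p; I \<leftarrow> threshold_model n K E; return_pmf (E, I) }"

end

theory Submission
  imports Defs
begin


definition rnd :: "real \<Rightarrow> nat set set \<Rightarrow> nat set set pmf" where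
  "rnd p P = map_pmf (\<lambda>f. {e\<in>P. f e}) (Pi_pmf P False (\<lambda>_. bernoulli_pmf p))"

lemma rnd_empty: "rnd p {} = return_pmf {}"
  by (simp add: rnd_def)

lemma rnd_union:
  assumes "finite A" "finite B" "A \<inter> B = {}"
  shows "rnd p (A \<union> B) = bind_pmf (rnd p A) (\<lambda>X. bind_pmf (rnd p B) (\<lambda>Y. return_pmf (X \<union> Y)))"
proof -
  have "rnd p (A \<union> B) = map_pmf (\<lambda>(f,g). {e\<in>A. f e} \<union> {e\<in>B. g e})
      (pair_pmf (Pi_pmf A False (\<lambda>_. bernoulli_pmf p)) (Pi_pmf B False (\<lambda>_. bernoulli_pmf p)))"
    unfolding rnd_def using assms
    by (subst Pi_pmf_union) (auto simp: map_pmf_comp case_prod_unfold intro!: map_pmf_cong)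
  also have "\<dots> = bind_pmf (rnd p A) (\<lambda>X. bind_pmf (rnd p B) (\<lambda>Y. return_pmf (X \<union> Y)))"
    by (simp add: rnd_def pair_pmf_def map_bind_pmf bind_map_pmf bind_return_pmf)
  finally show ?thesis .
qed

lemma rnd_reindex:
  assumes "finite S" "v \<notin> S"
  shows "map_pmf (\<lambda>f. {{v,u} | u. u \<in> S \<and> f u}) (Pi_pmf S False (\<lambda>_. bernoulli_pmf p))
       = rnd p ((\<lambda>u. {v,u}) ` S)"
proof -
  have inj: "inj_on (\<lambda>u. {v,u}) S" using assms(2) by (auto simp: inj_on_def doubleton_eq_iff)
  have "Pi_pmf S False (\<lambda>_. bernoulli_pmf p) =
     map_pmf (\<lambda>g. g \<circ> (\<lambda>u. {v,u})) (Pi_pmf ((\<lambda>u. {v,u}) ` S) False (\<lambda>_. bernoulli_pmf p))"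
    using assms inj by (intro Pi_pmf_bij_betw) (auto simp: bij_betw_def doubleton_eq_iff)
  then show ?thesis
    by (auto simp: rnd_def map_pmf_comp intro!: map_pmf_cong)
qed




definition inside :: "nat \<Rightarrow> nat set \<Rightarrow> nat set set" where
  "inside n S = {e \<in> vertex_pairs n. e \<subseteq> S}"
definition outside :: "nat \<Rightarrow> nat set \<Rightarrow> nat set set" where
  "outside n S = {e \<in> vertex_pairs n. \<not> e \<subseteq> S}"

definition rep :: "nat \<Rightarrow> nat set set \<Rightarrow> nat set \<Rightarrow> nat set \<Rightarrow> expl_state" where
  "rep n E0 I S = \<lparr> Actk = (\<lambda>k. {u \<in> I. deg_in E0 I u = k}), Bset = S - I,
                    Uset = {1..n} - S, Edges = E0 \<rparr>"

lemma finite_vertex_pairs: "finite (vertex_pairs n)"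
proof -
  have "vertex_pairs n \<subseteq> Pow {1..n}" by (auto simp: vertex_pairs_def)
  then show ?thesis by (rule finite_subset) auto
qed

lemma active_rep:
  assumes "\<forall>u\<in>I. deg_in E0 I u < K"
  shows "active_set K (rep n E0 I S) = I"
  using assms by (auto simp: active_set_def rep_def)

lemma dmax_lt_iff:
  assumes "finite U" "U \<noteq> {}"
  shows "dmax_induced E U < K \<longleftrightarrow> (\<forall>u\<in>U. deg_in E U u < K)"
  using assms by (simp add: dmax_induced_def)

lemma dmax_local:
  assumes "\<And>u w. u \<in> U \<Longrightarrow> w \<in> U \<Longrightarrow> ({u,w} \<in> E1 \<longleftrightarrow> {u,w} \<in> E2)"
  shows "dmax_induced E1 U = dmax_induced E2 U"
proof -
  have "deg_in E1 U u = deg_in E2 U u" if "u \<in> U" for u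
    unfolding deg_in_def using assms that by (intro arg_cong[where f=card]) auto
  then show ?thesis unfolding dmax_induced_def by (auto intro!: arg_cong[where f=Max])
qed




locale upd =
  fixes n K :: nat and E0 :: "nat set set" and I S :: "nat set" and v :: nat and f :: "nat \<Rightarrow> bool"
  assumes v: "v \<in> {1..n}" "v \<notin> S" and S: "S \<subseteq> {1..n}" and IS: "I \<subseteq> S"
    and E0: "E0 \<subseteq> inside n S" and degK: "\<forall>u\<in>I. deg_in E0 I u < K" and K: "K \<ge> 1"
begin

definition "E1 = E0 \<union> {{v,u} | u. u \<in> S \<and> f u}"
definition "R = {u \<in> I. f u}"

lemma finI: "finite I" by (rule finite_subset[OF IS finite_subset[OF S]]) simp
lemma vI: "v \<notin> I" using v IS by auto

lemma E0_sub: "e \<in> E0 \<Longrightarrow> e \<subseteq> S" using E0 by (auto simp: inside_def)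

lemma d1: "deg_in E1 (insert v I) v = card R"
proof -
  have "{w \<in> insert v I. {v, w} \<in> E1} = R"
  proof (rule set_eqI)
    fix w
    have a: "{v,w} \<notin> E0" using E0_sub v by blast
    have b: "{v,w} = {v,u} \<longleftrightarrow> w = u" for u using v IS by (auto simp: doubleton_eq_iff)
    show "w \<in> {w \<in> insert v I. {v, w} \<in> E1} \<longleftrightarrow> w \<in> R"
      using a b v IS unfolding E1_def R_def by (auto simp: doubleton_eq_iff)
  qed
  then show ?thesis by (simp add: deg_in_def)
qed

lemma d2: "u \<in> I \<Longrightarrow> deg_in E1 (insert v I) u = deg_in E0 I u + (if f u then 1 else 0)"
proof -
  assume u: "u \<in> I"
  have eq: "{w \<in> insert v I. {u, w} \<in> E1} = {w \<in> I. {u,w} \<in> E0} \<union> (if f u then {v} else {})"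
  proof (rule set_eqI)
    fix w
    have a: "{u,v} \<notin> E0" using E0_sub v by blast
    show "w \<in> {w \<in> insert v I. {u, w} \<in> E1} \<longleftrightarrow> w \<in> {w \<in> I. {u,w} \<in> E0} \<union> (if f u then {v} else {})"
      using a u v IS unfolding E1_def by (auto simp: doubleton_eq_iff insert_commute)
  qed
  have fin: "finite {w \<in> I. {u,w} \<in> E0}" using finI by simp
  have "v \<notin> {w \<in> I. {u,w} \<in> E0}" using vI by simp
  then show ?thesis unfolding deg_in_def eq using fin by auto
qed

lemma d3: "u \<in> I \<Longrightarrow> deg_in E1 I u = deg_in E0 I u"
proof -
  assume u: "u \<in> I"
  have "{w \<in> I. {u, w} \<in> E1} = {w \<in> I. {u,w} \<in> E0}"
    using u v IS unfolding E1_def by (auto simp: doubleton_eq_iff)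
  then show ?thesis by (simp add: deg_in_def)
qed

lemma ok_iff:
  "dmax_induced E1 (insert v I) < K \<longleftrightarrow>
     card R < K \<and> (\<forall>u\<in>R. u \<notin> Actk (rep n E0 I S) (K - 1))"
proof -
  have "dmax_induced E1 (insert v I) < K \<longleftrightarrow> (\<forall>u\<in>insert v I. deg_in E1 (insert v I) u < K)"
    using finI by (intro dmax_lt_iff) auto
  also have "\<dots> \<longleftrightarrow> card R < K \<and> (\<forall>u\<in>I. deg_in E0 I u + (if f u then 1 else 0) < K)"
    using d1 d2 by auto
  also have "\<dots> \<longleftrightarrow> card R < K \<and> (\<forall>u\<in>R. u \<notin> Actk (rep n E0 I S) (K - 1))"
    using degK K by (force simp: R_def rep_def)
  finally show ?thesis .
qed

lemma update:
  "expl_update K (rep n E0 I S) v f =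
     rep n E1 (if dmax_induced E1 (insert v I) < K then insert v I else I) (insert v S)"
proof -
  have act: "active_set K (rep n E0 I S) = I" using degK by (rule active_rep)
  have AB: "active_set K (rep n E0 I S) \<union> Bset (rep n E0 I S) = S"
    using act IS by (auto simp: rep_def)
  have newE: "Edges (rep n E0 I S) \<union> {{v, u} |u. u \<in> active_set K (rep n E0 I S) \<union> Bset (rep n E0 I S) \<and> f u} = E1"
    unfolding AB by (simp add: rep_def E1_def)
  have Rdef: "{u \<in> active_set K (rep n E0 I S). f u} = R" unfolding act R_def ..
  show ?thesis
  proof (cases "dmax_induced E1 (insert v I) < K")
    case True
    then have c: "card R < K \<and> (\<forall>u\<in>R. u \<notin> Actk (rep n E0 I S) (K - 1))" using ok_iff by simp
    have A: "{u. (u \<in> Actk (rep n E0 I S) k \<and> u \<notin> R)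
                \<or> (0 < k \<and> u \<in> R \<and> u \<in> Actk (rep n E0 I S) (k - 1))
                \<or> (u = v \<and> k = card R)}
          = {u \<in> insert v I. deg_in E1 (insert v I) u = k}" for k
    proof (rule set_eqI)
      fix u
      show "u \<in> {u. (u \<in> Actk (rep n E0 I S) k \<and> u \<notin> R)
                \<or> (0 < k \<and> u \<in> R \<and> u \<in> Actk (rep n E0 I S) (k - 1))
                \<or> (u = v \<and> k = card R)} \<longleftrightarrow> u \<in> {u \<in> insert v I. deg_in E1 (insert v I) u = k}"
      proof (cases "u \<in> I")
        case True
        then show ?thesis using d2[OF True] vI by (auto simp: rep_def R_def)
      next
        case False
        then show ?thesis using d1 by (auto simp: rep_def R_def)
      qed
    qed
    show ?thesis
      unfolding expl_update_def Let_def newE Rdef using True c A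
      by (simp add: rep_def fun_eq_iff) (auto simp: v)
  next
    case False
    then have c: "\<not> (card R < K \<and> (\<forall>u\<in>R. u \<notin> Actk (rep n E0 I S) (K - 1)))" using ok_iff by simp
    have A: "Actk (rep n E0 I S) = (\<lambda>k. {u \<in> I. deg_in E1 I u = k})"
      using d3 by (auto simp: rep_def)
    show ?thesis
      unfolding expl_update_def Let_def newE Rdef using False c
      by (simp add: A) (auto simp: rep_def v vI)
  qed
qed

end



lemma set_rnd: "X \<in> set_pmf (rnd p P) \<Longrightarrow> X \<subseteq> P"
  by (auto simp: rnd_def)

lemma outside_split:
  assumes "v \<in> {1..n}" "v \<notin> S" "S \<subseteq> {1..n}"
  shows "outside n S = (\<lambda>u. {v,u}) ` S \<union> outside n (insert v S)"
    and "(\<lambda>u. {v,u}) ` S \<inter> outside n (insert v S) = {}"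
proof -
  show "outside n S = (\<lambda>u. {v,u}) ` S \<union> outside n (insert v S)"
  proof (rule set_eqI)
    fix e
    show "e \<in> outside n S \<longleftrightarrow> e \<in> (\<lambda>u. {v,u}) ` S \<union> outside n (insert v S)"
    proof
      assume "e \<in> outside n S"
      then obtain a b where e: "e = {a,b}" "a \<in> {1..n}" "b \<in> {1..n}" "a \<noteq> b" "\<not> e \<subseteq> S"
        by (auto simp: outside_def vertex_pairs_def)
      show "e \<in> (\<lambda>u. {v,u}) ` S \<union> outside n (insert v S)"
      proof (cases "e \<subseteq> insert v S")
        case True
        then have "(a = v \<and> b \<in> S) \<or> (b = v \<and> a \<in> S)" using e by auto
        then show ?thesis using e by (auto simp: insert_commute)
      next
        case False
        then show ?thesis using \<open>e \<in> outside n S\<close> by (auto simp: outside_def)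
      qed
    next
      assume "e \<in> (\<lambda>u. {v,u}) ` S \<union> outside n (insert v S)"
      then show "e \<in> outside n S"
      proof
        assume "e \<in> (\<lambda>u. {v,u}) ` S"
        then obtain u where u: "u \<in> S" "e = {v,u}" by auto
        then have "u \<noteq> v" using assms by auto
        moreover have "u \<in> {1..n}" using u assms by auto
        ultimately have "e \<in> vertex_pairs n" using u assms unfolding vertex_pairs_def by blast
        moreover have "\<not> e \<subseteq> S" using u assms by auto
        ultimately show ?thesis by (simp add: outside_def)
      qed (auto simp: outside_def)
    qed
  qed
  show "(\<lambda>u. {v,u}) ` S \<inter> outside n (insert v S) = {}"
    by (auto simp: outside_def)
qed

lemma finite_outside: "finite (outside n S)"
  by (rule finite_subset[OF _ finite_vertex_pairs]) (auto simp: outside_def)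

lemma iter_map_cong: "map_pmf g (iter_pmf 0 f s) = return_pmf (g s)" by simp

lemma vp_intro: "a \<in> {1..n} \<Longrightarrow> b \<in> {1..n} \<Longrightarrow> a \<noteq> b \<Longrightarrow> {a,b} \<in> vertex_pairs n"
  unfolding vertex_pairs_def by blast

lemma main:
  assumes K: "K \<ge> 1"
  shows "m = n - card S \<Longrightarrow> S \<subseteq> {1..n} \<Longrightarrow> I \<subseteq> S \<Longrightarrow> E0 \<subseteq> inside n S \<Longrightarrow>
     \<forall>u\<in>I. deg_in E0 I u < K \<Longrightarrow>
   map_pmf (\<lambda>s. (Edges s, active_set K s)) (iter_pmf m (expl_step K p) (rep n E0 I S)) =
   bind_pmf (rnd p (outside n S)) (\<lambda>F. bind_pmf (map_pmf fst (iter_pmf m (threshold_step n K (E0 \<union> F)) (I,S)))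
      (\<lambda>J. return_pmf (E0 \<union> F, J)))"
proof (induction m arbitrary: E0 I S)
  case 0
  have finS: "finite S" using 0(2) by (rule finite_subset) simp
  have "card S \<le> card {1..n}" using 0(2) by (intro card_mono) auto
  moreover have "card S \<ge> card {1..n}" using 0 by simp
  ultimately have Sn: "S = {1..n}" using 0(2) by (intro card_subset_eq) auto
  have "outside n S = {}" unfolding Sn by (auto simp: outside_def vertex_pairs_def)
  moreover have "active_set K (rep n E0 I S) = I" using 0(5) by (rule active_rep)
  ultimately show ?case by (simp add: rnd_empty bind_return_pmf) (simp add: rep_def)
next
  case (Suc m)
  note IH = Suc.IH
  have S: "S \<subseteq> {1..n}" and IS: "I \<subseteq> S" and E0: "E0 \<subseteq> inside n S"
    and degK: "\<forall>u\<in>I. deg_in E0 I u < K" using Suc.prems by auto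
  have finS: "finite S" using S by (rule finite_subset) simp
  define U where "U = {1..n} - S"
  have "card S < n" using Suc.prems(1) by simp
  then have Une: "U \<noteq> {}" using S unfolding U_def by auto
  have finU: "finite U" unfolding U_def by simp
  define I' where "I' = (\<lambda>v E. if dmax_induced E (insert v I) < K then insert v I else I)"
  define H where "H = (\<lambda>v E1. bind_pmf (rnd p (outside n (insert v S))) (\<lambda>F.
      bind_pmf (map_pmf fst (iter_pmf m (threshold_step n K (E1 \<union> F)) (I' v E1, insert v S)))
      (\<lambda>J. return_pmf (E1 \<union> F, J))))"
  define G where "G = (\<lambda>v E. bind_pmf (map_pmf fst (iter_pmf m (threshold_step n K E) (I' v E, insert v S)))
      (\<lambda>J. return_pmf (E, J)))"
  have act: "active_set K (rep n E0 I S) = I" using degK by (rule active_rep)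
  have AB: "active_set K (rep n E0 I S) \<union> Bset (rep n E0 I S) = S"
    using act IS by (auto simp: rep_def)
  have "map_pmf (\<lambda>s. (Edges s, active_set K s)) (iter_pmf (Suc m) (expl_step K p) (rep n E0 I S))
     = bind_pmf (pmf_of_set U) (\<lambda>v. bind_pmf (Pi_pmf S False (\<lambda>_. bernoulli_pmf p)) (\<lambda>f.
         map_pmf (\<lambda>s. (Edges s, active_set K s)) (iter_pmf m (expl_step K p) (expl_update K (rep n E0 I S) v f))))"
    by (simp add: expl_step_def AB map_bind_pmf bind_assoc_pmf bind_return_pmf U_def)
       (simp add: rep_def)
  also have "\<dots> = bind_pmf (pmf_of_set U) (\<lambda>v. bind_pmf (Pi_pmf S False (\<lambda>_. bernoulli_pmf p)) (\<lambda>f.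
         H v (E0 \<union> {{v,u} | u. u \<in> S \<and> f u})))"
  proof (rule bind_pmf_cong[OF refl], rule bind_pmf_cong[OF refl])
    fix v f assume "v \<in> set_pmf (pmf_of_set U)" "f \<in> set_pmf (Pi_pmf S False (\<lambda>_. bernoulli_pmf p))"
    then have v: "v \<in> {1..n}" "v \<notin> S" using Une finU by (auto simp: U_def)
    interpret upd n K E0 I S v f using v S IS E0 degK K by unfold_locales auto
    have inv1: "E1 \<subseteq> inside n (insert v S)"
      using E0 v S unfolding E1_def inside_def by (auto intro!: vp_intro)
    have inv2: "\<forall>u\<in>I' v E1. deg_in E1 (I' v E1) u < K"
    proof (cases "dmax_induced E1 (insert v I) < K")
      case True
      then have "\<forall>u\<in>insert v I. deg_in E1 (insert v I) u < K"
        using dmax_lt_iff[of "insert v I" E1 K] finI by auto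
      then show ?thesis using True by (simp add: I'_def)
    next
      case False
      then show ?thesis using degK d3 by (simp add: I'_def)
    qed
    have "m = n - card (insert v S)" using Suc.prems(1) v finS by simp
    moreover have "insert v S \<subseteq> {1..n}" using v S by auto
    moreover have "I' v E1 \<subseteq> insert v S" using IS by (auto simp: I'_def)
    ultimately have "map_pmf (\<lambda>s. (Edges s, active_set K s)) (iter_pmf m (expl_step K p) (rep n E1 (I' v E1) (insert v S)))
        = H v E1"
      unfolding H_def using IH inv1 inv2 by blast
    then show "map_pmf (\<lambda>s. (Edges s, active_set K s)) (iter_pmf m (expl_step K p) (expl_update K (rep n E0 I S) v f))
        = H v (E0 \<union> {{v,u} | u. u \<in> S \<and> f u})"
      using update by (simp add: I'_def E1_def)
  qed
  also have "\<dots> = bind_pmf (pmf_of_set U) (\<lambda>v. bind_pmf (rnd p ((\<lambda>u. {v,u}) ` S)) (\<lambda>A. H v (E0 \<union> A)))"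
  proof (rule bind_pmf_cong[OF refl])
    fix v assume "v \<in> set_pmf (pmf_of_set U)"
    then have v: "v \<notin> S" using Une finU by (auto simp: U_def)
    show "bind_pmf (Pi_pmf S False (\<lambda>_. bernoulli_pmf p)) (\<lambda>f. H v (E0 \<union> {{v,u} | u. u \<in> S \<and> f u}))
        = bind_pmf (rnd p ((\<lambda>u. {v,u}) ` S)) (\<lambda>A. H v (E0 \<union> A))"
      using rnd_reindex[OF finS v, of p, symmetric] by (simp add: bind_map_pmf)
  qed
  also have "\<dots> = bind_pmf (pmf_of_set U) (\<lambda>v. bind_pmf (rnd p (outside n S)) (\<lambda>F. G v (E0 \<union> F)))"
  proof (rule bind_pmf_cong[OF refl])
    fix v assume "v \<in> set_pmf (pmf_of_set U)"
    then have v: "v \<in> {1..n}" "v \<notin> S" using Une finU by (auto simp: U_def)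
    note sp = outside_split[OF v S]
    have "bind_pmf (rnd p (outside n S)) (\<lambda>F. G v (E0 \<union> F)) =
      bind_pmf (rnd p ((\<lambda>u. {v,u}) ` S)) (\<lambda>A. bind_pmf (rnd p (outside n (insert v S))) (\<lambda>B. G v (E0 \<union> (A \<union> B))))"
      unfolding sp(1) using sp(2) finS finite_outside
      by (subst rnd_union) (auto simp: bind_assoc_pmf bind_return_pmf)
    also have "\<dots> = bind_pmf (rnd p ((\<lambda>u. {v,u}) ` S)) (\<lambda>A. H v (E0 \<union> A))"
      unfolding H_def
    proof (rule bind_pmf_cong[OF refl], rule bind_pmf_cong[OF refl])
      fix A B assume A: "A \<in> set_pmf (rnd p ((\<lambda>u. {v,u}) ` S))"
        and B: "B \<in> set_pmf (rnd p (outside n (insert v S)))"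
      have Bo: "B \<subseteq> outside n (insert v S)" using set_rnd[OF B] .
      have "dmax_induced (E0 \<union> A \<union> B) (insert v I) = dmax_induced (E0 \<union> A) (insert v I)"
      proof (rule dmax_local)
        fix u w assume "u \<in> insert v I" "w \<in> insert v I"
        then have "{u,w} \<subseteq> insert v S" using IS by auto
        then have "{u,w} \<notin> B" using Bo by (auto simp: outside_def)
        then show "{u,w} \<in> E0 \<union> A \<union> B \<longleftrightarrow> {u,w} \<in> E0 \<union> A" by auto
      qed
      then have "I' v (E0 \<union> A \<union> B) = I' v (E0 \<union> A)" by (simp add: I'_def)
      then show "G v (E0 \<union> (A \<union> B)) = bind_pmf (map_pmf fst (iter_pmf m (threshold_step n K (E0 \<union> A \<union> B))
          (I' v (E0 \<union> A), insert v S))) (\<lambda>J. return_pmf (E0 \<union> A \<union> B, J))"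
        unfolding G_def by (simp add: Un_assoc)
    qed
    finally show "bind_pmf (rnd p ((\<lambda>u. {v,u}) ` S)) (\<lambda>A. H v (E0 \<union> A)) = bind_pmf (rnd p (outside n S)) (\<lambda>F. G v (E0 \<union> F))"
      by simp
  qed
  also have "\<dots> = bind_pmf (rnd p (outside n S)) (\<lambda>F. bind_pmf (pmf_of_set U) (\<lambda>v. G v (E0 \<union> F)))"
    by (rule bind_commute_pmf)
  also have "\<dots> = bind_pmf (rnd p (outside n S)) (\<lambda>F. bind_pmf (map_pmf fst (iter_pmf (Suc m) (threshold_step n K (E0 \<union> F)) (I,S)))
      (\<lambda>J. return_pmf (E0 \<union> F, J)))"
    by (simp add: G_def I'_def threshold_step_def U_def map_bind_pmf bind_map_pmf bind_assoc_pmf Un_insert_right cong: if_cong)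
  finally show ?case .
qed


theorem proposition1:
  fixes n K :: nat and p :: real
  assumes "n \<ge> 1" and "K \<ge> 1" and "0 \<le> p" and "p \<le> 1"
  shows "threshold_exploration n K p = threshold_model_joint n K p"
proof -
  have init: "expl_init n = rep n {} {} {}" by (simp add: expl_init_def rep_def)
  have out: "outside n {} = vertex_pairs n" by (auto simp: outside_def vertex_pairs_def)
  have "threshold_exploration n K p = bind_pmf (rnd p (outside n {})) (\<lambda>F.
      bind_pmf (map_pmf fst (iter_pmf n (threshold_step n K ({} \<union> F)) ({},{}))) (\<lambda>J. return_pmf ({} \<union> F, J)))"
    unfolding threshold_exploration_def init by (rule main[OF assms(2)]) (auto simp: inside_def)
  also have "\<dots> = threshold_model_joint n K p"
    by (simp add: out threshold_model_joint_def threshold_model_def erdos_renyi_def rnd_def)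
  finally show ?thesis .
qed

end
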